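(* Let $H$ be a hyperbolic component of the Mandelbrot set $\mathfrak{M}$ different from the main cardioid, with associated angles $\theta_H^-<\theta_H^+$. Define the discontinuity locus \[\mathrm{Disc}(H)=\big\{\theta\in\mathbb{T} : I^{\circ}_{\theta_H^+}(\theta)\neq I^{\circ}_{\theta_H^-}(\theta)\big\}.\] Then \[\mathrm{Disc}(H)=\bigcup_{m\geq 1}\sigma^{-m}(\Pi_1(H)).\]
   Context: $\mathbb{T}=\mathbb{R}/\mathbb{Z}$ and $\sigma:\mathbb{T}\to\mathbb{T}$, $\sigma(\theta)=2\theta$, is the angle-doubling map. For $a,b\in\mathbb{T}$, the notations $(a,b)$, $[a,b]$, $[a,b)$, $(a,b]$ denote arcs of $\mathbb{T}$ traversed in the positive direction from $a$ to $b$. Let $\mathfrak{M}$ be the Mandelbrot set and $R_{\mathfrak{M}}(\theta)$ its external (parameter) ray of angle $\theta$. For a hyperbolic component $H$ of $\mathfrak{M}$ other than the main cardioid, with root point $r_H$, there are exactly two angles $0<\theta_H^-<\theta_H^+<1$ whose parameter rays land at $r_H$ (Douady–Hubbard). Set $\Pi_1(H)=[\theta_H^-,\theta_H^+]\subset\mathbb{T}$. For $\alpha\in\mathbb{T}$, the coding $I^{\circ}_{\alpha}:\mathbb{T}\to\{A,B,\circ\}^{\mathbb{N}}$ sends $\theta$ to $i_0i_1\cdots$ where, for $n\ge 0$, $i_n=A$ if $\sigma^n(\theta)\in(\frac{\alpha+1}{2},\frac{\alpha}{2})$, $i_n=B$ if $\sigma^n(\theta)\in(\frac{\alpha}{2},\frac{\alpha+1}{2})$,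 and $i_n=\circ$ if $\sigma^n(\theta)\in\{\frac{\alpha}{2},\frac{\alpha+1}{2}\}$. *)

theory Defs
  imports "HOL-Complex_Analysis.Complex_Analysis"
begin

section \<open>Circle T = R/Z, represented by real numbers modulo 1\<close>

definition sigma :: "real \<Rightarrow> real" where
  "sigma x = frac (2 * x)"

text \<open>Open arc (a,b) of T traversed positively from a to b (as a 1-periodic set of reals).\<close>
definition open_arc :: "real \<Rightarrow> real \<Rightarrow> real set" where
  "open_arc a b = {x. 0 < frac (x - a) \<and> frac (x - a) < frac (b - a)}"

definition closed_arc :: "real \<Rightarrow> real \<Rightarrow> real set" where
  "closed_arc a b = {x. frac (x - a) \<le> frac (b - a)}"

datatype itsym = A | B | Circ

definition coding :: "real \<Rightarrow> real \<Rightarrow> nat \<Rightarrow> itsym" where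
  "coding \<alpha> \<theta> n =
     (let x = (sigma ^^ n) \<theta> in
      if x \<in> open_arc ((\<alpha> + 1) / 2) (\<alpha> / 2) then A
      else if x \<in> open_arc (\<alpha> / 2) ((\<alpha> + 1) / 2) then B
      else Circ)"

definition qc :: "complex \<Rightarrow> complex \<Rightarrow> complex" where
  "qc c z = z ^ 2 + c"

definition mandelbrot :: "complex set" where
  "mandelbrot = {c. bounded (range (\<lambda>n. (qc c ^^ n) 0))}"

definition PhiM :: "complex \<Rightarrow> complex" where
  "PhiM = (THE \<Phi>. \<Phi> holomorphic_on (- mandelbrot)
              \<and> bij_betw \<Phi> (- mandelbrot) {w. norm w > 1}
              \<and> ((\<lambda>c. \<Phi> c / c) \<longlongrightarrow> 1) at_infinity)"

definition param_ray :: "real \<Rightarrow> complex set" where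
  "param_ray \<theta> = {c \<in> - mandelbrot. \<exists>r>1. PhiM c = complex_of_real r * cis (2 * pi * \<theta>)}"

definition ray_lands :: "real \<Rightarrow> complex \<Rightarrow> bool" where
  "ray_lands \<theta> c \<longleftrightarrow>
     ((\<lambda>r. inv_into (- mandelbrot) PhiM (complex_of_real r * cis (2 * pi * \<theta>)))
        \<longlongrightarrow> c) (at_right 1)"

text \<open>Multiplier of the n-cycle through z (derivative of the n-th iterate at z).\<close>
definition multiplier :: "complex \<Rightarrow> complex \<Rightarrow> nat \<Rightarrow> complex" where
  "multiplier c z n = (\<Prod>k<n. 2 * (qc c ^^ k) z)"

definition exact_period :: "complex \<Rightarrow> complex \<Rightarrow> nat \<Rightarrow> bool" where
  "exact_period c z n \<longleftrightarrow> n > 0 \<and> (qc c ^^ n) z = z \<and> (\<forall>j. 0 < j \<and> j < n \<longrightarrow> (qc c ^^ j) z \<noteq> z)"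

definition hyperbolic_params :: "complex set" where
  "hyperbolic_params = {c. \<exists>z n. exact_period c z n \<and> norm (multiplier c z n) < 1}"

definition hyperbolic_component :: "complex set \<Rightarrow> bool" where
  "hyperbolic_component H \<longleftrightarrow>
     (\<exists>c \<in> hyperbolic_params. H = connected_component_set hyperbolic_params c)"

definition main_cardioid :: "complex set" where
  "main_cardioid = connected_component_set hyperbolic_params 0"

text \<open>Root of H: the boundary point at which the multiplier of the attracting cycle
  (continuously extended to the closure) equals 1.\<close>
definition is_root :: "complex set \<Rightarrow> complex \<Rightarrow> bool" where
  "is_root H r \<longleftrightarrow> r \<in> frontier H \<and>
     (\<exists>cs zs ns. (\<forall>k. cs k \<in> H \<and> exact_period (cs k) (zs k) (ns k)
                        \<and> norm (multiplier (cs k) (zs k) (ns k)) < 1)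
               \<and> cs \<longlonglongrightarrow> r
               \<and> (\<lambda>k. multiplier (cs k) (zs k) (ns k)) \<longlonglongrightarrow> 1)"

end

theory Submission
  imports Defs
begin

lemma frac_small: "-1 \<le> (z::real) \<Longrightarrow> z < 1 \<Longrightarrow> frac z = (if z \<ge> 0 then z else z + 1)"
proof (cases "z \<ge> 0")
  case True
  assume "z < 1" then show ?thesis using True by (simp add: frac_eq)
next
  case False
  assume h: "-1 \<le> z" "z < 1"
  have i: "z - (z + 1) \<in> \<int>" by (simp add: Ints_minus)
  have "frac z = z + 1" unfolding frac_unique_iff
    using False h i by auto
  then show ?thesis using False by simp
qed

lemma frac_shift: "frac ((x::real) - c) = frac (frac x - c)"
proof -
  have "x - c = (frac x - c) + of_int (floor x)" by (simp add: frac_def)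
  then show ?thesis by (metis frac_add_of_int_right)
qed

lemma frac_ge: "0 \<le> frac (x::real)" and frac_lt: "frac x < 1"
  by (auto simp: frac_lt_1)

lemma letter_B:
  fixes a x :: real
  assumes "0 < a" "a < 1"
  shows "x \<in> open_arc (a/2) ((a+1)/2) \<longleftrightarrow> a/2 < frac x \<and> frac x < (a+1)/2"
proof -
  have f1: "frac ((a+1)/2 - a/2) = 1/2" by (simp add: frac_eq field_simps)
  have F: "frac (x - a/2) = (if frac x - a/2 \<ge> 0 then frac x - a/2 else frac x - a/2 + 1)"
    unfolding frac_shift[of x "a/2"]
  proof (rule frac_small)
    show "-1 \<le> frac x - a/2" using frac_ge[of x] frac_lt[of x] assms by (auto simp: field_simps simp del: frac_ge_0)
    show "frac x - a/2 < 1" using frac_ge[of x] frac_lt[of x] assms by (auto simp: field_simps simp del: frac_ge_0)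
  qed
  have y: "0 \<le> frac x" "frac x < 1" using frac_ge[of x] frac_lt[of x] by auto
  show ?thesis unfolding open_arc_def mem_Collect_eq f1 F
    using y assms by (auto simp: field_simps simp del: frac_ge_0 frac_gt_0_iff)
qed

lemma letter_A:
  fixes a x :: real
  assumes "0 < a" "a < 1"
  shows "x \<in> open_arc ((a+1)/2) (a/2) \<longleftrightarrow> frac x < a/2 \<or> (a+1)/2 < frac x"
proof -
  have f1: "frac (a/2 - (a+1)/2) = 1/2"
  proof -
    have "a/2 - (a+1)/2 = -1/2" by (simp add: field_simps)
    then show ?thesis using frac_small[of "-1/2"] by simp
  qed
  have F: "frac (x - (a+1)/2) = (if frac x - (a+1)/2 \<ge> 0 then frac x - (a+1)/2 else frac x - (a+1)/2 + 1)"
    unfolding frac_shift[of x "(a+1)/2"]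
  proof (rule frac_small)
    show "-1 \<le> frac x - (a+1)/2" using frac_ge[of x] frac_lt[of x] assms by (auto simp: field_simps simp del: frac_ge_0)
    show "frac x - (a+1)/2 < 1" using frac_ge[of x] frac_lt[of x] assms by (auto simp: field_simps simp del: frac_ge_0)
  qed
  have y: "0 \<le> frac x" "frac x < 1" using frac_ge[of x] frac_lt[of x] by auto
  show ?thesis unfolding open_arc_def mem_Collect_eq f1 F
    using y assms by (auto simp: field_simps simp del: frac_ge_0 frac_gt_0_iff)
qed

lemma sigma_arc:
  fixes x :: real
  assumes "0 < tm" "tm < tp" "tp < 1"
  shows "sigma x \<in> closed_arc tm tp \<longleftrightarrow>
    (tm/2 \<le> frac x \<and> frac x \<le> tp/2) \<or> ((tm+1)/2 \<le> frac x \<and> frac x \<le> (tp+1)/2)"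
proof -
  define y where "y = frac x"
  have y: "0 \<le> y" "y < 1" using frac_ge frac_lt y_def by auto
  have s: "sigma x = frac (2*y)"
  proof -
    have "2*x = 2*frac x + of_int (2*floor x)" by (simp add: frac_def)
    then show ?thesis unfolding sigma_def y_def by (metis frac_add_of_int_right)
  qed
  have ft: "frac (tp - tm) = tp - tm" using assms by (simp add: frac_eq)
  have s2: "frac (2*y) = (if 2*y - 1 \<ge> 0 then 2*y - 1 else 2*y)"
  proof (cases "2*y - 1 \<ge> 0")
    case True
    have "frac (2*y) = 2*y - 1" unfolding frac_unique_iff using True y
      by (auto simp: Ints_def intro: exI[of _ 1])
    then show ?thesis using True by simp
  next
    case False
    then show ?thesis using y by (simp add: frac_eq)
  qed
  show ?thesis
  proof (cases "2*y - 1 \<ge> 0")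
    case True
    have "frac (sigma x - tm) = (if 2*y - 1 - tm \<ge> 0 then 2*y-1-tm else 2*y-1-tm+1)"
    proof -
      have "sigma x = 2*y - 1" using s s2 True by simp
      then show ?thesis using True y assms frac_small[of "2*y-1-tm"] by simp
    qed
    then show ?thesis unfolding closed_arc_def ft y_def[symmetric] using True y assms
      by auto
  next
    case False
    have "frac (sigma x - tm) = (if 2*y - tm \<ge> 0 then 2*y-tm else 2*y-tm+1)"
    proof -
      have "sigma x = 2*y" using s s2 False by simp
      then show ?thesis using False y assms frac_small[of "2*y-tm"] by simp
    qed
    then show ?thesis unfolding closed_arc_def ft y_def[symmetric] using False y assms
      by auto
  qed
qed

lemma step:
  assumes "0 < tm" "tm < tp" "tp < 1"
  shows "coding tp \<theta> n \<noteq> coding tm \<theta> n \<longleftrightarrow> (sigma ^^ Suc n) \<theta> \<in> closed_arc tm tp"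
proof -
  define x where "x = (sigma ^^ n) \<theta>"
  have e: "(sigma ^^ Suc n) \<theta> = sigma x" by (simp add: x_def)
  have p: "0 < tp" "tp < 1" "0 < tm" "tm < 1" using assms by auto
  show ?thesis
    unfolding coding_def Let_def x_def[symmetric] e sigma_arc[OF assms]
      letter_A[OF p(1,2)] letter_B[OF p(1,2)] letter_A[OF p(3,4)] letter_B[OF p(3,4)]
    using assms by auto
qed

theorem lemma2p4:
  fixes H :: "complex set" and rH :: complex and tm tp :: real
  assumes "hyperbolic_component H"
    and "H \<noteq> main_cardioid"
    and "is_root H rH"
    and "0 < tm" and "tm < tp" and "tp < 1"
    and "ray_lands tm rH" and "ray_lands tp rH"
  shows "{\<theta>. coding tp \<theta> \<noteq> coding tm \<theta>}
           = (\<Union>m\<in>{1..}. {\<theta>. (sigma ^^ m) \<theta> \<in> closed_arc tm tp})"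
proof (intro set_eqI iffI)
  fix \<theta> assume "\<theta> \<in> {\<theta>. coding tp \<theta> \<noteq> coding tm \<theta>}"
  then obtain n where "coding tp \<theta> n \<noteq> coding tm \<theta> n" by auto
  then have "(sigma ^^ Suc n) \<theta> \<in> closed_arc tm tp" using step assms(4-6) by blast
  then show "\<theta> \<in> (\<Union>m\<in>{1..}. {\<theta>. (sigma ^^ m) \<theta> \<in> closed_arc tm tp})" by force
next
  fix \<theta> assume "\<theta> \<in> (\<Union>m\<in>{1..}. {\<theta>. (sigma ^^ m) \<theta> \<in> closed_arc tm tp})"
  then obtain m where m: "m \<ge> 1" "(sigma ^^ m) \<theta> \<in> closed_arc tm tp" by auto
  then obtain n where "m = Suc n" using not0_implies_Suc by fastforce
  then have "coding tp \<theta> n \<noteq> coding tm \<theta> n" using step assms(4-6) m by blast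
  then show "\<theta> \<in> {\<theta>. coding tp \<theta> \<noteq> coding tm \<theta>}" by auto
qed

end
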